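(* Let $\alpha,\beta,\mu,\nu>0$, $0<z\le1$, and let $\mathbf a=(a_n)_{n\ge1}$ be a sequence of positive numbers with $a_n\to\infty$ such that $\zeta_{\mu,\nu}(\alpha,\beta,z)<\infty$. Then for all $r>0$, $$2\zeta_{\mu,\nu}(\alpha,\beta,z)\exp\Big\{-\mu\,\frac{\zeta_{\mu+1,\nu}(\alpha,\beta,z)}{\zeta_{\mu,\nu}(\alpha,\beta,z)}\,r^2\Big\}\le S^{(\alpha,\beta)}_{\mu,\nu}(r,\mathbf a;z).$$
   Context: $S_{\mu,\nu}^{(\alpha,\beta)}(r,\mathbf a;z)=\sum_{n=1}^\infty \frac{2a_n^{\beta}(\nu)_n z^n}{(a_n^{\alpha}+r^2)^{\mu}\,n!}$, $(\nu)_n=\Gamma(\nu+n)/\Gamma(\nu)$, and $\zeta_{\mu,\nu}(\alpha,\beta,z)=\sum_{n=1}^\infty\frac{(\nu)_n z^n}{n!\,a_n^{\alpha\mu-\beta}}$. *)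

theory Defs
  imports "HOL-Analysis.Analysis"
begin

text \<open>The series S and zeta, indexed from n = 1 (the sequence a is a function nat => real,
  only the values a 1, a 2, ... matter).\<close>

definition S_term :: "real \<Rightarrow> real \<Rightarrow> real \<Rightarrow> real \<Rightarrow> real \<Rightarrow> (nat \<Rightarrow> real) \<Rightarrow> real \<Rightarrow> nat \<Rightarrow> real" where
  "S_term \<mu> \<nu> \<alpha> \<beta> r a z n =
     2 * a n powr \<beta> * pochhammer \<nu> n * z ^ n / ((a n powr \<alpha> + r\<^sup>2) powr \<mu> * fact n)"

definition S_series :: "real \<Rightarrow> real \<Rightarrow> real \<Rightarrow> real \<Rightarrow> real \<Rightarrow> (nat \<Rightarrow> real) \<Rightarrow> real \<Rightarrow> real" where
  "S_series \<mu> \<nu> \<alpha> \<beta> r a z = (\<Sum>n. S_term \<mu> \<nu> \<alpha> \<beta> r a z (Suc n))"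

definition zeta_term :: "real \<Rightarrow> real \<Rightarrow> real \<Rightarrow> real \<Rightarrow> (nat \<Rightarrow> real) \<Rightarrow> real \<Rightarrow> nat \<Rightarrow> real" where
  "zeta_term \<mu> \<nu> \<alpha> \<beta> a z n =
     pochhammer \<nu> n * z ^ n / (fact n * a n powr (\<alpha> * \<mu> - \<beta>))"

definition zeta_series :: "real \<Rightarrow> real \<Rightarrow> real \<Rightarrow> real \<Rightarrow> (nat \<Rightarrow> real) \<Rightarrow> real \<Rightarrow> real" where
  "zeta_series \<mu> \<nu> \<alpha> \<beta> a z = (\<Sum>n. zeta_term \<mu> \<nu> \<alpha> \<beta> a z (Suc n))"

end

theory Submission
  imports Defs
begin

lemma term_eq:
  fixes A P \<alpha> \<beta> \<mu> r :: real
  assumes "A > 0"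
  shows "2 * A powr \<beta> * P / (A powr \<alpha> + r\<^sup>2) powr \<mu>
     = 2 * (P / A powr (\<alpha>*\<mu> - \<beta>)) * (1 + r\<^sup>2 / A powr \<alpha>) powr (-\<mu>)"
proof -
  have Ap: "A powr \<alpha> > 0" using assms by simp
  have 1: "A powr \<alpha> + r\<^sup>2 = A powr \<alpha> * (1 + r\<^sup>2 / A powr \<alpha>)" using Ap by (simp add: field_simps)
  have pos: "1 + r\<^sup>2 / A powr \<alpha> > 0" using Ap by (simp add: add_pos_nonneg)
  have 2: "(A powr \<alpha> + r\<^sup>2) powr \<mu> = A powr (\<alpha>*\<mu>) * (1 + r\<^sup>2 / A powr \<alpha>) powr \<mu>"
    unfolding 1 using Ap pos by (simp add: powr_mult powr_powr)
  have 3: "A powr (\<alpha>*\<mu> - \<beta>) = A powr (\<alpha>*\<mu>) / A powr \<beta>" using assms by (simp add: powr_diff)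
  show ?thesis unfolding 2 3 using pos assms by (simp add: powr_minus_divide field_simps)
qed

lemma key_ineq:
  fixes t \<mu> c :: real
  assumes "t \<ge> 0" "\<mu> > 0"
  shows "(1 + t) powr (-\<mu>) \<ge> exp c * (1 - \<mu> * t - c)"
proof -
  have "ln (1 + t) \<le> t" using assms by (simp add: ln_add_one_self_le_self)
  hence "exp (-\<mu> * t) \<le> exp (-\<mu> * ln (1+t))" using assms
    by (simp add: mult_left_mono)
  also have "\<dots> = (1 + t) powr (-\<mu>)" using assms by (simp add: powr_def)
  finally have a: "exp (-\<mu> * t) \<le> (1 + t) powr (-\<mu>)" .
  have h: "1 - \<mu>*t - c \<le> exp (-(\<mu>*t) - c)" using exp_ge_add_one_self[of "-(\<mu>*t) - c"] by linarith
  have "exp c * (1 - \<mu> * t - c) \<le> exp c * exp (-(\<mu>*t) - c)"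
    using h by (intro mult_left_mono) auto
  moreover have "exp c * exp (-(\<mu>*t) - c) = exp (-\<mu>*t)" by (simp add: exp_add[symmetric])
  ultimately show ?thesis using a by linarith
qed

theorem mainTheorem8:
  fixes \<alpha> \<beta> \<mu> \<nu> z r :: real and a :: "nat \<Rightarrow> real"
  assumes "\<alpha> > 0" and "\<beta> > 0" and "\<mu> > 0" and "\<nu> > 0"
    and "0 < z" and "z \<le> 1"
    and "\<And>n. n \<ge> 1 \<Longrightarrow> a n > 0"
    and "filterlim a at_top sequentially"
    and "summable (\<lambda>n. zeta_term \<mu> \<nu> \<alpha> \<beta> a z (Suc n))"
    and "r > 0"
  shows "2 * zeta_series \<mu> \<nu> \<alpha> \<beta> a z *
           exp (- \<mu> * (zeta_series (\<mu> + 1) \<nu> \<alpha> \<beta> a z / zeta_series \<mu> \<nu> \<alpha> \<beta> a z) * r\<^sup>2)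
         \<le> S_series \<mu> \<nu> \<alpha> \<beta> r a z"
proof -
  define w where "w n = zeta_term \<mu> \<nu> \<alpha> \<beta> a z (Suc n)" for n
  define v where "v n = zeta_term (\<mu>+1) \<nu> \<alpha> \<beta> a z (Suc n)" for n
  define s where "s n = S_term \<mu> \<nu> \<alpha> \<beta> r a z (Suc n)" for n
  define t where "t n = r\<^sup>2 / a (Suc n) powr \<alpha>" for n
  define P where "P n = pochhammer \<nu> (Suc n) * z ^ (Suc n) / fact (Suc n)" for n
  have A: "a (Suc n) > 0" for n using assms(7) by simp
  have Pp: "P n > 0" for n unfolding P_def using assms(4,5) by (simp add: pochhammer_pos)
  have wP: "w n = P n / a (Suc n) powr (\<alpha>*\<mu> - \<beta>)" for n
    unfolding w_def P_def zeta_term_def by simp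
  have wpos: "w n > 0" for n unfolding wP using Pp[of n] A[of n] by simp
  have vw: "v n = w n / a (Suc n) powr \<alpha>" for n
  proof -
    have "a (Suc n) powr (\<alpha> * (\<mu>+1) - \<beta>) = a (Suc n) powr (\<alpha>*\<mu> - \<beta>) * a (Suc n) powr \<alpha>"
      by (simp add: powr_add[symmetric] algebra_simps)
    thus ?thesis unfolding v_def wP zeta_term_def P_def by simp
  qed
  have tw: "t n * w n = r\<^sup>2 * v n" for n unfolding t_def vw by simp
  have tnn: "t n \<ge> 0" for n unfolding t_def by simp
  have sw: "s n = 2 * w n * (1 + t n) powr (-\<mu>)" for n
  proof -
    have "s n = 2 * a (Suc n) powr \<beta> * P n / (a (Suc n) powr \<alpha> + r\<^sup>2) powr \<mu>"
      unfolding s_def S_term_def P_def by (simp add: ac_simps)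
    also have "\<dots> = 2 * w n * (1 + t n) powr (-\<mu>)"
      unfolding wP t_def by (rule term_eq[OF A])
    finally show ?thesis .
  qed
  have sumw: "summable w" using assms(9) unfolding w_def by simp
  have ev1: "eventually (\<lambda>n. a (Suc n) \<ge> 1) sequentially"
  proof -
    have "eventually (\<lambda>n. a n \<ge> 1) sequentially"
      using assms(8) by (simp add: filterlim_at_top)
    thus ?thesis by (rule eventually_sequentially_Suc[THEN iffD2])
  qed
  have sumv: "summable v"
  proof (rule summable_comparison_test_ev[OF _ sumw])
    show "eventually (\<lambda>n. norm (v n) \<le> w n) sequentially"
      using ev1
    proof eventually_elim
      case (elim n)
      have "a (Suc n) powr \<alpha> \<ge> 1" using elim assms(1) by (simp add: ge_one_powr_ge_zero)
      thus ?case unfolding vw using wpos[of n] by (simp add: divide_le_eq abs_of_nonneg mult_le_cancel_left1 less_imp_le)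
    qed
  qed
  have sle: "(1 + t n) powr (-\<mu>) \<le> 1" for n
  proof -
    have "(1 + t n) powr \<mu> \<ge> 1" using tnn[of n] assms(3) by (simp add: ge_one_powr_ge_zero)
    thus ?thesis by (simp add: powr_minus_divide divide_le_eq)
  qed
  have sums: "summable s"
  proof (rule summable_comparison_test[OF _ summable_mult[OF sumw, of 2]])
    show "\<exists>N. \<forall>n\<ge>N. norm (s n) \<le> 2 * w n"
    proof (intro exI[of _ 0] allI impI)
      fix n :: nat
      have "norm (s n) = 2 * w n * (1 + t n) powr (-\<mu>)" using wpos[of n] by (simp add: sw)
      also have "\<dots> \<le> 2 * w n * 1" using wpos[of n] sle[of n] by (intro mult_left_mono) auto
      finally show "norm (s n) \<le> 2 * w n" by simp
    qed
  qed
  define Z where "Z = suminf w"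
  define Z' where "Z' = suminf v"
  have Zpos: "Z > 0" unfolding Z_def using sumw wpos by (intro suminf_pos) auto
  define T where "T = r\<^sup>2 * Z' / Z"
  define c where "c = - \<mu> * T"
  define g where "g n = 2 * exp c * ((1 + \<mu> * T) * w n - \<mu> * r\<^sup>2 * v n)" for n
  have gle: "g n \<le> s n" for n
  proof -
    have "exp c * (1 - \<mu> * t n - c) \<le> (1 + t n) powr (-\<mu>)" by (rule key_ineq[OF tnn assms(3)])
    hence "2 * w n * (exp c * (1 - \<mu> * t n - c)) \<le> 2 * w n * (1 + t n) powr (-\<mu>)"
      using wpos[of n] by (intro mult_left_mono) auto
    moreover have "2 * w n * (exp c * (1 - \<mu> * t n - c)) = g n"
      unfolding g_def c_def using tw[of n] by (simp add: algebra_simps)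
    ultimately show ?thesis using sw by simp
  qed
  have gsums: "g sums (2 * exp c * ((1 + \<mu> * T) * Z - \<mu> * r\<^sup>2 * Z'))"
    unfolding g_def Z_def Z'_def
    by (intro sums_mult sums_diff summable_sums sumw sumv)
  have "2 * exp c * ((1 + \<mu> * T) * Z - \<mu> * r\<^sup>2 * Z') \<le> suminf s"
    using gsums sums gle by (metis sums_le summable_sums)
  moreover have "2 * exp c * ((1 + \<mu> * T) * Z - \<mu> * r\<^sup>2 * Z') = 2 * Z * exp c"
    unfolding T_def using Zpos by (simp add: field_simps)
  ultimately show ?thesis
    unfolding S_series_def zeta_series_def s_def[symmetric] w_def[symmetric] v_def[symmetric]
      Z_def[symmetric] Z'_def[symmetric] c_def T_def
    by (simp add: algebra_simps)
qed

end
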